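(* Let $G$ be a finite simple connected well-dominated graph of order at least $3$. If the Cartesian product $G \,\square\, H$ is well-dominated for some finite simple connected graph $H$ of order at least $2$, then the minimum degree of $G$ satisfies $\delta(G) \ge 2$.
   Context: A graph is well-dominated if every minimal (with respect to inclusion) dominating set is a minimum dominating set. The Cartesian product $G\,\square\, H$ has vertex set $V(G)\times V(H)$, with $(g_1,h_1)$ adjacent to $(g_2,h_2)$ iff either ($g_1=g_2$ and $h_1h_2\in E(H)$) or ($h_1=h_2$ and $g_1g_2\in E(G)$). *)

theory Defs
  imports Main
begin

definition fin_simple_graph :: "'a set \<Rightarrow> 'a set set \<Rightarrow> bool" where
  "fin_simple_graph V E \<longleftrightarrow> finite V \<and> (\<forall>e\<in>E. e \<subseteq> V \<and> card e = 2)"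

definition adj :: "'a set set \<Rightarrow> 'a \<Rightarrow> 'a \<Rightarrow> bool" where
  "adj E u v \<longleftrightarrow> {u, v} \<in> E"

definition neighbours :: "'a set \<Rightarrow> 'a set set \<Rightarrow> 'a \<Rightarrow> 'a set" where
  "neighbours V E v = {u \<in> V. adj E v u}"

definition degree :: "'a set \<Rightarrow> 'a set set \<Rightarrow> 'a \<Rightarrow> nat" where
  "degree V E v = card (neighbours V E v)"

definition min_degree :: "'a set \<Rightarrow> 'a set set \<Rightarrow> nat" where
  "min_degree V E = Min (degree V E ` V)"

definition connected_graph :: "'a set \<Rightarrow> 'a set set \<Rightarrow> bool" where
  "connected_graph V E \<longleftrightarrow> V \<noteq> {} \<and>
     (\<forall>u\<in>V. \<forall>v\<in>V. (u, v) \<in> {(x, y). x \<in> V \<and> y \<in> V \<and> adj E x y}\<^sup>*)"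

definition dominating :: "'a set \<Rightarrow> 'a set set \<Rightarrow> 'a set \<Rightarrow> bool" where
  "dominating V E D \<longleftrightarrow> D \<subseteq> V \<and> (\<forall>v\<in>V. v \<in> D \<or> (\<exists>u\<in>D. adj E u v))"

definition minimal_dominating :: "'a set \<Rightarrow> 'a set set \<Rightarrow> 'a set \<Rightarrow> bool" where
  "minimal_dominating V E D \<longleftrightarrow> dominating V E D \<and> (\<forall>D'. D' \<subset> D \<longrightarrow> \<not> dominating V E D')"

definition minimum_dominating :: "'a set \<Rightarrow> 'a set set \<Rightarrow> 'a set \<Rightarrow> bool" where
  "minimum_dominating V E D \<longleftrightarrow> dominating V E D \<and> (\<forall>D'. dominating V E D' \<longrightarrow> card D \<le> card D')"

definition well_dominated :: "'a set \<Rightarrow> 'a set set \<Rightarrow> bool" where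
  "well_dominated V E \<longleftrightarrow> (\<forall>D. minimal_dominating V E D \<longrightarrow> minimum_dominating V E D)"

definition cart_edges :: "'a set \<Rightarrow> 'a set set \<Rightarrow> 'b set \<Rightarrow> 'b set set \<Rightarrow> ('a \<times> 'b) set set" where
  "cart_edges VG EG VH EH =
     {{(g, h1), (g, h2)} | g h1 h2. g \<in> VG \<and> {h1, h2} \<in> EH} \<union>
     {{(g1, h), (g2, h)} | g1 g2 h. h \<in> VH \<and> {g1, g2} \<in> EG}"

end

theory Submission
  imports Defs
begin

lemma adj_sym: "adj E u v = adj E v u" by (simp add: adj_def insert_commute)

lemma adj_irrefl: "fin_simple_graph V E \<Longrightarrow> \<not> adj E u u"
  by (auto simp: fin_simple_graph_def adj_def)

lemma adj_in: "fin_simple_graph V E \<Longrightarrow> adj E u v \<Longrightarrow> u \<in> V \<and> v \<in> V"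
  by (auto simp: fin_simple_graph_def adj_def)

lemma has_nbr:
  assumes "fin_simple_graph V E" "connected_graph V E" "card V \<ge> 2" "v \<in> V"
  shows "\<exists>u\<in>V. adj E v u"
proof -
  have fin: "finite V" using assms(1) by (simp add: fin_simple_graph_def)
  have "V - {v} \<noteq> {}"
  proof
    assume "V - {v} = {}"
    then have "V \<subseteq> {v}" by auto
    then have "card V \<le> 1" using card_mono[of "{v}" V] by simp
    then show False using assms(3) by simp
  qed
  then obtain w where w: "w \<in> V" "w \<noteq> v" by auto
  then have "(v, w) \<in> {(x, y). x \<in> V \<and> y \<in> V \<and> adj E x y}\<^sup>*"
    using assms(2,4) by (simp add: connected_graph_def)
  then show ?thesis
    by (rule converse_rtranclE) (use w in auto)
qed

lemma path_cross:
  "(a, b) \<in> R\<^sup>* \<Longrightarrow> b \<in> S \<Longrightarrow> a \<notin> S \<Longrightarrow> \<exists>c d. (c, d) \<in> R \<and> c \<notin> S \<and> d \<in> S"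
  by (induction rule: converse_rtrancl_induct) blast+

lemma cart_adj1: "g \<in> VG \<Longrightarrow> adj EH h h' \<Longrightarrow> adj (cart_edges VG EG VH EH) (g, h) (g, h')"
  unfolding adj_def cart_edges_def by blast

lemma cart_adj2: "h \<in> VH \<Longrightarrow> adj EG g g' \<Longrightarrow> adj (cart_edges VG EG VH EH) (g, h) (g', h)"
  unfolding adj_def cart_edges_def by blast

lemma cart_adj_cases:
  "adj (cart_edges VG EG VH EH) (g, h) (g', h') \<Longrightarrow> (g = g' \<and> adj EH h h') \<or> (h = h' \<and> adj EG g g')"
  unfolding adj_def cart_edges_def by (auto simp: doubleton_eq_iff insert_commute)


theorem corollary20:
  fixes VG :: "'a set" and EG :: "'a set set" and VH :: "'b set" and EH :: "'b set set"
  assumes "fin_simple_graph VG EG" and "connected_graph VG EG"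
    and "well_dominated VG EG" and "card VG \<ge> 3"
    and "fin_simple_graph VH EH" and "connected_graph VH EH" and "card VH \<ge> 2"
    and "well_dominated (VG \<times> VH) (cart_edges VG EG VH EH)"
  shows "min_degree VG EG \<ge> 2"

proof (rule ccontr)
  assume nd: "\<not> 2 \<le> min_degree VG EG"
  have gG: "fin_simple_graph VG EG" by fact
  have gH: "fin_simple_graph VH EH" by fact
  have finG: "finite VG" using assms(1) by (simp add: fin_simple_graph_def)
  have finH: "finite VH" using assms(5) by (simp add: fin_simple_graph_def)
  have neG: "VG \<noteq> {}" using assms(4) by auto
  have "min_degree VG EG \<in> degree VG EG ` VG" unfolding min_degree_def
    by (rule Min_in) (auto simp: finG neG)
  then obtain x where x: "x \<in> VG" "degree VG EG x < 2" using nd by auto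
  have cG2: "card VG \<ge> 2" using assms(4) by simp
  obtain y where y: "y \<in> VG" "adj EG x y" using has_nbr[OF assms(1,2) cG2 x(1)] by auto
  have xnb: "u = y" if "adj EG x u" for u
  proof (rule ccontr)
    assume "u \<noteq> y"
    have "u \<in> VG" using adj_in[OF gG that] by simp
    then have "{u, y} \<subseteq> neighbours VG EG x" using y that by (auto simp: neighbours_def)
    moreover have "finite (neighbours VG EG x)" using finG by (simp add: neighbours_def)
    ultimately have "card {u, y} \<le> degree VG EG x" unfolding degree_def by (rule card_mono[rotated])
    with \<open>u \<noteq> y\<close> x(2) show False by simp
  qed
  have "\<not> VG \<subseteq> {x, y}"
  proof
    assume "VG \<subseteq> {x, y}"
    then have "card VG \<le> card {x, y}" by (rule card_mono[rotated]) simp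
    also have "\<dots> \<le> 2" by (simp add: card_insert_if)
    finally show False using assms(4) by simp
  qed
  then obtain w where w: "w \<in> VG" "w \<notin> {x, y}" by auto
  have "(w, x) \<in> {(a, b). a \<in> VG \<and> b \<in> VG \<and> adj EG a b}\<^sup>*"
    using assms(2) w x by (simp add: connected_graph_def)
  from path_cross[OF this, of "{x, y}"] w obtain c d where
    cd: "c \<in> VG" "d \<in> VG" "adj EG c d" "c \<notin> {x, y}" "d \<in> {x, y}" by auto
  have "d \<noteq> x"
  proof
    assume "d = x"
    then have "adj EG x c" using cd adj_sym by metis
    then have "c = y" by (rule xnb)
    with cd show False by simp
  qed
  then have dy: "d = y" using cd by simp
  define z where "z = c"
  have z: "z \<in> VG" "adj EG z y" "z \<noteq> x" "z \<noteq> y" using cd dy z_def by auto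
  have nxz: "\<not> adj EG x z" using xnb z by blast
  define indep where "indep S \<longleftrightarrow> (\<forall>u\<in>S. \<forall>v\<in>S. \<not> adj EG u v)" for S
  define F where "F = {S. S \<subseteq> VG \<and> x \<in> S \<and> z \<in> S \<and> indep S}"
  have xzF: "{x, z} \<in> F" unfolding F_def indep_def
    using x z nxz adj_irrefl[OF gG] adj_sym[of EG x z] by (auto)
  have "F \<subseteq> Pow VG" unfolding F_def by auto
  then have finF: "finite F" by (rule finite_subset) (simp add: finG)
  define m where "m = Max (card ` F)"
  have "m \<in> card ` F" unfolding m_def using finF xzF by (intro Max_in) auto
  then obtain I where I: "I \<in> F" "card I = m" by auto
  have Imax: "card S \<le> card I" if "S \<in> F" for S
    unfolding I(2) m_def using finF that by (intro Max_ge) auto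
  have IV: "I \<subseteq> VG" and xI: "x \<in> I" and zI: "z \<in> I" and indI: "indep I"
    using I(1) by (auto simp: F_def)
  have finI: "finite I" using IV finG finite_subset by blast
  have domI: "dominating VG EG I"
    unfolding dominating_def
  proof (intro conjI IV ballI)
    fix v assume v: "v \<in> VG"
    show "v \<in> I \<or> (\<exists>u\<in>I. adj EG u v)"
    proof (rule ccontr)
      assume nv: "\<not> (v \<in> I \<or> (\<exists>u\<in>I. adj EG u v))"
      have "insert v I \<in> F" unfolding F_def using IV xI zI indI v nv adj_irrefl[OF gG]
        unfolding indep_def by (auto; metis adj_sym)
      from Imax[OF this] nv finI show False by simp
    qed
  qed
  have minI: "minimal_dominating VG EG I"
    unfolding minimal_dominating_def
  proof (intro conjI domI allI impI notI)
    fix D' assume D': "D' \<subset> I" "dominating VG EG D'"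
    then obtain v where v: "v \<in> I" "v \<notin> D'" by auto
    then have "v \<in> VG" using IV by auto
    with D'(2) v obtain u where "u \<in> D'" "adj EG u v" unfolding dominating_def by auto
    with D'(1) v indI show False unfolding indep_def by auto
  qed

  have "EG \<subseteq> Pow VG" using assms(1) unfolding fin_simple_graph_def by auto
  then have finE: "finite EG" by (rule finite_subset) (simp add: finG)
  have mdmin: "card D \<le> card D'" if "minimal_dominating VG EG D" "dominating VG EG D'" for D D'
    using assms(3) that unfolding well_dominated_def minimum_dominating_def by blast
  define M where "M = {A. minimal_dominating VG EG A}"
  define f where "f A = card {e\<in>EG. e \<subseteq> A}" for A
  have IM: "I \<in> M" using minI by (simp add: M_def)
  have "M \<subseteq> Pow VG" unfolding M_def minimal_dominating_def dominating_def by auto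
  then have finM: "finite M" by (rule finite_subset) (simp add: finG)
  define fm where "fm = Max (f ` M)"
  have "fm \<in> f ` M" unfolding fm_def using finM IM by (intro Max_in) auto
  then obtain A where A: "A \<in> M" "f A = fm" by auto
  have Amax: "f S \<le> f A" if "S \<in> M" for S
    unfolding A(2) fm_def using finM that by (intro Max_ge) auto
  have minA: "minimal_dominating VG EG A" using A(1) by (simp add: M_def)
  have domA: "dominating VG EG A" using minA by (simp add: minimal_dominating_def)
  have AV: "A \<subseteq> VG" using domA by (simp add: dominating_def)
  have finA: "finite A" using AV finG finite_subset by blast
  have IA: "card I \<le> card A" using mdmin[OF minI domA] .
  have priv: "\<exists>p\<in>VG. p \<notin> A \<and> adj EG a p \<and> (\<forall>b\<in>A. adj EG b p \<longrightarrow> b = a)" if aA: "a \<in> A" for a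
  proof (rule ccontr)
    assume np: "\<not> ?thesis"
    have np': "\<exists>b\<in>A. b \<noteq> a \<and> adj EG b p" if "p \<in> VG" "p \<notin> A" "adj EG a p" for p
      using np that by blast
    have "\<not> dominating VG EG (A - {a})" using minA aA unfolding minimal_dominating_def by blast
    then obtain v where v: "v \<in> VG" "v \<notin> A - {a}" "\<not> (\<exists>u\<in>A - {a}. adj EG u v)"
      using AV unfolding dominating_def by blast
    have va: "v = a"
    proof (rule ccontr)
      assume "v \<noteq> a"
      then have "v \<notin> A" using v by auto
      then obtain u where "u \<in> A" "adj EG u v" using domA v(1) unfolding dominating_def by blast
      with v \<open>v \<noteq> a\<close> have "u = a" by auto
      with np'[OF v(1) \<open>v \<notin> A\<close>] v \<open>adj EG u v\<close> show False by blast
    qed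
    have aiso: "\<not> adj EG b a" if "b \<in> A" for b using v va that adj_irrefl[OF gG, of a] by auto
    obtain u where u: "u \<in> VG" "adj EG a u" using has_nbr[OF assms(1,2) cG2] aA AV by blast
    have uA: "u \<notin> A" using aiso u adj_sym by metis
    obtain b where b: "b \<in> A" "b \<noteq> a" "adj EG b u" using np'[OF u(1) uA u(2)] by blast
    define A' where "A' = insert u (A - {a})"
    have domA': "dominating VG EG A'" unfolding dominating_def
    proof (intro conjI ballI)
      show "A' \<subseteq> VG" using AV u by (auto simp: A'_def)
    next
      fix w assume w: "w \<in> VG"
      show "w \<in> A' \<or> (\<exists>c\<in>A'. adj EG c w)"
      proof (cases "w = a")
        case True then have "adj EG u a" using u(2) adj_sym by metis
          then show ?thesis using True by (auto simp: A'_def)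
      next
        case False
        show ?thesis
        proof (cases "w \<in> A")
          case True then show ?thesis using False by (auto simp: A'_def)
        next
          case wA: False
          then obtain c where c: "c \<in> A" "adj EG c w" using domA w unfolding dominating_def by blast
          show ?thesis
          proof (cases "c = a")
            case False then show ?thesis using c by (auto simp: A'_def)
          next
            case True
            then obtain c' where "c' \<in> A" "adj EG c' w" "c' \<noteq> a" using np'[OF w wA] c by blast
            then show ?thesis by (auto simp: A'_def)
          qed
        qed
      qed
    qed
    have cA': "card A' = card A" unfolding A'_def using finA aA uA
      by (simp add: card_insert_if) (metis Suc_pred card_gt_0_iff empty_iff)
    have minA': "minimal_dominating VG EG A'" unfolding minimal_dominating_def
    proof (intro conjI domA' allI impI notI)
      fix D' assume "D' \<subset> A'" "dominating VG EG D'"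
      then have "card D' < card A'" using finA by (intro psubset_card_mono) (auto simp: A'_def)
      with mdmin[OF minA \<open>dominating VG EG D'\<close>] cA' show False by simp
    qed
    have sub: "{e\<in>EG. e \<subseteq> A} \<subset> {e\<in>EG. e \<subseteq> A'}"
    proof
      show "{e\<in>EG. e \<subseteq> A} \<subseteq> {e\<in>EG. e \<subseteq> A'}"
      proof safe
        fix e q assume e: "e \<in> EG" "e \<subseteq> A" "q \<in> e"
        have "card e = 2" using assms(1) e(1) by (simp add: fin_simple_graph_def)
        then obtain p1 p2 where "e = {p1, p2}" "p1 \<noteq> p2" by (meson card_2_iff)
        have "a \<notin> e"
        proof
          assume "a \<in> e"
          then obtain q' where q': "e = {a, q'}" using \<open>e = {p1, p2}\<close> by auto
          then have "adj EG q' a" unfolding adj_def using e(1) by (simp add: insert_commute)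
          moreover have "q' \<in> A" using q' e(2) by auto
          ultimately show False using aiso by blast
        qed
        then show "q \<in> A'" using e by (auto simp: A'_def)
      qed
    next
      have "{b, u} \<in> EG" using b(3) by (simp add: adj_def)
      moreover have "{b, u} \<subseteq> A'" using b by (auto simp: A'_def)
      moreover have "\<not> {b, u} \<subseteq> A" using uA by auto
      ultimately show "{e\<in>EG. e \<subseteq> A} \<noteq> {e\<in>EG. e \<subseteq> A'}" by blast
    qed
    have "f A < f A'" unfolding f_def using finE by (intro psubset_card_mono) (use sub in auto)
    moreover have "A' \<in> M" using minA' by (simp add: M_def)
    ultimately show False using Amax by fastforce
  qed

  have "VH \<noteq> {}" using assms(7) by auto
  then obtain h0 where h0: "h0 \<in> VH" by auto
  obtain h1 where h1: "h1 \<in> VH" "adj EH h0 h1" using has_nbr[OF assms(5,6,7) h0] by auto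
  have h01: "h0 \<noteq> h1" using h1 adj_irrefl[OF gH] by metis
  have h10: "adj EH h1 h0" using h1(2) adj_sym by metis
  define EP where "EP = cart_edges VG EG VH EH"
  define D1 where "D1 = A \<times> VH"
  define D2 where "D2 = ((I - {x}) \<times> VH) \<union> ({x} \<times> (VH - {h0}))"
  have domD1: "dominating (VG \<times> VH) EP D1" unfolding dominating_def
  proof (intro conjI ballI)
    show "D1 \<subseteq> VG \<times> VH" using AV by (auto simp: D1_def)
  next
    fix gh assume gh: "gh \<in> VG \<times> VH"
    then obtain g h where ghd: "gh = (g, h)" "g \<in> VG" "h \<in> VH" by auto
    show "gh \<in> D1 \<or> (\<exists>u\<in>D1. adj EP u gh)"
    proof (cases "g \<in> A")
      case True then show ?thesis using ghd by (auto simp: D1_def)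
    next
      case False
      then obtain a where "a \<in> A" "adj EG a g" using domA ghd unfolding dominating_def by blast
      then have "adj EP (a, h) (g, h)" unfolding EP_def using ghd by (intro cart_adj2)
      then show ?thesis using ghd \<open>a \<in> A\<close> by (auto simp: D1_def)
    qed
  qed
  have minD1: "minimal_dominating (VG \<times> VH) EP D1" unfolding minimal_dominating_def
  proof (intro conjI domD1 allI impI notI)
    fix D' assume D': "D' \<subset> D1" "dominating (VG \<times> VH) EP D'"
    then obtain a h where ah: "(a, h) \<in> D1" "(a, h) \<notin> D'" by auto
    then have aA: "a \<in> A" and hV: "h \<in> VH" by (auto simp: D1_def)
    obtain p where p: "p \<in> VG" "p \<notin> A" "adj EG a p" "\<And>b. b \<in> A \<Longrightarrow> adj EG b p \<Longrightarrow> b = a"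
      using priv[OF aA] by blast
    have "(p, h) \<notin> D'" using D'(1) p(2) by (auto simp: D1_def)
    moreover have "(p, h) \<in> VG \<times> VH" using p hV by auto
    ultimately obtain u where u: "u \<in> D'" "adj EP u (p, h)" using D'(2) unfolding dominating_def by blast
    obtain c k where ck: "u = (c, k)" by (cases u)
    have cA: "c \<in> A" using u(1) ck D'(1) by (auto simp: D1_def)
    from cart_adj_cases[of VG EG VH EH c k p h] u(2) ck
    have "(c = p \<and> adj EH k h) \<or> (k = h \<and> adj EG c p)" by (simp add: EP_def)
    then show False
    proof
      assume "c = p \<and> adj EH k h" then show False using cA p(2) by simp
    next
      assume "k = h \<and> adj EG c p"
      then have "c = a" "k = h" using p(4) cA by auto
      then show False using u(1) ck ah(2) by simp
    qed
  qed
  have domD2: "dominating (VG \<times> VH) EP D2" unfolding dominating_def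
  proof (intro conjI ballI)
    show "D2 \<subseteq> VG \<times> VH" using IV x(1) by (auto simp: D2_def)
  next
    fix gh assume gh: "gh \<in> VG \<times> VH"
    then obtain g h where ghd: "gh = (g, h)" "g \<in> VG" "h \<in> VH" by auto
    show "gh \<in> D2 \<or> (\<exists>u\<in>D2. adj EP u gh)"
    proof (cases "g = x")
      case True
      show ?thesis
      proof (cases "h = h0")
        case False then show ?thesis using True ghd by (auto simp: D2_def)
      next
        case hh: True
        have "adj EP (x, h1) (x, h0)" unfolding EP_def using x(1) h10 by (rule cart_adj1)
        moreover have "(x, h1) \<in> D2" using h1 h01 by (auto simp: D2_def)
        ultimately show ?thesis using True hh ghd by blast
      qed
    next
      case gx: False
      show ?thesis
      proof (cases "g \<in> I")
        case True then show ?thesis using gx ghd by (auto simp: D2_def)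
      next
        case False
        then obtain c where c: "c \<in> I" "adj EG c g" using domI ghd unfolding dominating_def by blast
        show ?thesis
        proof (cases "c = x")
          case False
          have "adj EP (c, h) (g, h)" unfolding EP_def using ghd c(2) by (intro cart_adj2)
          moreover have "(c, h) \<in> D2" using False c(1) ghd by (auto simp: D2_def)
          ultimately show ?thesis using ghd by blast
        next
          case True
          then have "g = y" using c(2) xnb by simp
          have "adj EG z g" using z(2) \<open>g = y\<close> by simp
          then have "adj EP (z, h) (g, h)" unfolding EP_def using ghd by (intro cart_adj2)
          moreover have "(z, h) \<in> D2" using zI z(3) ghd by (auto simp: D2_def)
          ultimately show ?thesis using ghd by blast
        qed
      qed
    qed
  qed
  have "card D1 \<le> card D2"
    using assms(8) minD1 domD2 unfolding well_dominated_def minimum_dominating_def EP_def by blast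
  moreover have "card D2 < card D1"
  proof -
    have disj: "((I - {x}) \<times> VH) \<inter> ({x} \<times> (VH - {h0})) = {}" by auto
    have "card D2 = card ((I - {x}) \<times> VH) + card ({x} \<times> (VH - {h0}))"
      unfolding D2_def using finI finH disj by (intro card_Un_disjoint) auto
    also have "\<dots> = (card I - 1) * card VH + (card VH - 1)"
      using finI finH xI h0 by (simp add: card_cartesian_product)
    finally have c2: "card D2 = (card I - 1) * card VH + (card VH - 1)" .
    have c1: "card D1 = card A * card VH" by (simp add: D1_def card_cartesian_product)
    have "card I \<ge> 1" using finI xI by (metis One_nat_def Suc_leI card_gt_0_iff empty_iff)
    then obtain k where k: "card I = Suc k" by (metis Suc_le_D One_nat_def)
    have "card VH \<ge> 2" by fact
    then have "(card I - 1) * card VH + (card VH - 1) < card I * card VH"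
      using k by simp
    also have "\<dots> \<le> card A * card VH" using IA by simp
    finally show ?thesis using c1 c2 by simp
  qed
  ultimately show False by simp
qed

end
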